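(* Let $f$ be a discretely conic function on a discrete set $\mathrm{dom}(f)\subseteq\mathbb{R}^n$ such that for every $\alpha\in\mathbb{R}$ the set $\{x\in\mathrm{dom}(f): f(x)\le\alpha\}$ is finite. Then there exists a conic function $g$ with $\mathrm{dom}(g)=\mathrm{conv}(\mathrm{dom}(f))$ and $g(x)=f(x)$ for all $x\in\mathrm{dom}(f)$ if and only if for every $i\ge 2$ (for which $\mathrm{MIN}_i(f)$ is defined) $$\mathrm{MIN}_i(f)\subseteq \mathrm{relbd}(P_i),\qquad P_i=\mathrm{conv}(\mathrm{MIN}_1(f)\cup\dots\cup\mathrm{MIN}_i(f)).$$ Equivalently: for all $z\in\mathrm{dom}(f)\setminus\mathrm{MIN}_1(f)$, $\{x\in\mathrm{dom}(f): f(x)=f(z)\}\subseteq\mathrm{relbd}(\mathrm{conv}\{x\in\mathrm{dom}(f): f(x)\le f(z)\})$.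
   Context: A set $D\subseteq\mathbb{R}^n$ is discrete if every $x\in D$ has a ball around it meeting $D$ only in $x$. For points $x^{(1)},\dots,x^{(k)}$, $\mathrm{cone}(x^{(1)},\dots,x^{(k-1)}\mid x^{(k)}) := x^{(k)}+\{\sum_{i<k}\lambda_i (x^{(k)}-x^{(i)}) : \lambda_i\ge 0\}$. A function $f$ with discrete domain is discretely conic if for all $y,x^{(1)},\dots,x^{(k)}\in\mathrm{dom}(f)$ with $f(x^{(1)})\le\dots\le f(x^{(k)})$ and $y\in\mathrm{cone}(x^{(1)},\dots,x^{(k-1)}\mid x^{(k)})$ we have $f(y)\ge f(x^{(k)})$. A function $g$ on a convex set is conic if for all $y,z\in\mathrm{dom}(g)$, $t\ge0$ with $g(y)\le g(z)$ and $z+t(z-y)\in\mathrm{dom}(g)$, $g(z+t(z-y))\ge g(z)$. Under the finiteness hypothesis, the distinct values of $f$ form an increasing sequence $v_1<v_2<\cdots$, and $\mathrm{MIN}_i(f)=\{x: f(x)=v_i\}$. $\mathrm{relbd}(S)$ is the boundary of $S$ relative to its affine hull. *)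

theory Defs
  imports "HOL-Analysis.Analysis"
begin

definition discrete_set :: "'a::metric_space set \<Rightarrow> bool" where
  "discrete_set D \<longleftrightarrow> (\<forall>x\<in>D. \<exists>e>0. ball x e \<inter> D = {x})"

definition dcone :: "'a::real_vector list \<Rightarrow> 'a \<Rightarrow> 'a set" where
  "dcone xs z = {z + (\<Sum>i<length xs. l i *\<^sub>R (z - xs ! i)) | l. \<forall>i. 0 \<le> l i}"

text \<open>Discretely conic function f with domain D: for points x(1),...,x(k) in D
  (here the nonempty list xs) with f(x(1)) <= ... <= f(x(k)) and y in D lying in
  cone(x(1),...,x(k-1) | x(k)), we have f(y) >= f(x(k)).\<close>
definition discretely_conic :: "'a::real_vector set \<Rightarrow> ('a \<Rightarrow> real) \<Rightarrow> bool" where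
  "discretely_conic D f \<longleftrightarrow>
    (\<forall>xs y. xs \<noteq> [] \<and> set xs \<subseteq> D \<and> y \<in> D \<and> sorted (map f xs)
       \<and> y \<in> dcone (butlast xs) (last xs) \<longrightarrow> f (last xs) \<le> f y)"

definition conic_on :: "'a::real_vector set \<Rightarrow> ('a \<Rightarrow> real) \<Rightarrow> bool" where
  "conic_on C g \<longleftrightarrow>
    (\<forall>y\<in>C. \<forall>z\<in>C. \<forall>t::real. 0 \<le> t \<and> g y \<le> g z \<and> z + t *\<^sub>R (z - y) \<in> C
        \<longrightarrow> g z \<le> g (z + t *\<^sub>R (z - y)))"

definition MIN1 :: "'a set \<Rightarrow> ('a \<Rightarrow> real) \<Rightarrow> 'a set" where
  "MIN1 D f = {x\<in>D. \<forall>y\<in>D. f x \<le> f y}"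

end

theory Submission imports Defs begin

lemma sum_nth_distinct:
  assumes "distinct ys"
  shows "(\<Sum>i<length ys. h (ys!i)) = (\<Sum>y\<in>set ys. (h y :: 'b::comm_monoid_add))"
proof -
  have "(\<Sum>y\<in>set ys. h y) = sum_list (map h ys)" using assms by (rule sum.distinct_set_conv_list)
  also have "\<dots> = (\<Sum>i\<in>{0..<length ys}. map h ys ! i)" by (simp add: sum_list_sum_nth)
  also have "\<dots> = (\<Sum>i<length ys. h (ys!i))" by (simp add: atLeast0LessThan)
  finally show ?thesis by simp
qed

lemma key:
  fixes D :: "'a::real_vector set"
  assumes dc: "discretely_conic D f" and x: "x \<in> D" and S: "finite S" "S \<subseteq> D"
    and le: "\<forall>y\<in>S. f y \<le> f x" and u0: "\<forall>y\<in>S. 0 \<le> u y" and u1: "sum u S = 1"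
    and ux: "(\<Sum>y\<in>S. u y *\<^sub>R y) = x" and y0: "y0 \<in> S" "u y0 > 0"
  shows "f x \<le> f y0"
proof -
  obtain zs where zs: "set zs = S" "distinct zs" using finite_distinct_list[OF S(1)] by blast
  define ys where "ys = sort_key f zs"
  have ys: "set ys = S" "distinct ys" "sorted (map f ys)" using zs by (auto simp: ys_def)
  define xs where "xs = ys @ [x]"
  have ne: "xs \<noteq> []" and sub: "set xs \<subseteq> D" using ys S x by (auto simp: xs_def)
  have so: "sorted (map f xs)" using ys le by (auto simp: xs_def sorted_append)
  have bl: "butlast xs = ys" "last xs = x" by (auto simp: xs_def)
  define c where "c = u y0"
  define l where "l i = (if i < length ys then u (ys!i) / c - (if ys!i = y0 then 1 else 0) else 0)" for i
  have lnn: "\<forall>i. 0 \<le> l i"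
  proof
    fix i show "0 \<le> l i"
    proof (cases "i < length ys")
      case True
      then have "ys!i \<in> S" using ys(1) nth_mem by blast
      then have "0 \<le> u (ys!i) / c" using u0 y0 by (auto simp: c_def)
      moreover have "ys!i = y0 \<Longrightarrow> u (ys!i) / c = 1" using y0 by (simp add: c_def)
      ultimately show ?thesis using True by (auto simp: l_def)
    qed (simp add: l_def)
  qed
  have "(\<Sum>i<length ys. l i *\<^sub>R (x - ys!i))
        = (\<Sum>i<length ys. (u (ys!i) / c - (if ys!i = y0 then 1 else 0)) *\<^sub>R (x - ys!i))"
    by (rule sum.cong) (auto simp: l_def)
  also have "\<dots> = (\<Sum>y\<in>S. (u y / c - (if y = y0 then 1 else 0)) *\<^sub>R (x - y))"
    using sum_nth_distinct[OF ys(2), of "\<lambda>y. (u y / c - (if y = y0 then 1 else 0)) *\<^sub>R (x - y)"] ys(1)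
    by simp
  also have "\<dots> = (\<Sum>y\<in>S. (u y / c) *\<^sub>R (x - y)) - (\<Sum>y\<in>S. (if y = y0 then 1 else 0) *\<^sub>R (x - y))"
    by (simp add: scaleR_diff_left sum_subtractf)
  also have "(\<Sum>y\<in>S. (if y = y0 then 1 else 0) *\<^sub>R (x - y)) = x - y0"
  proof -
    have "(\<Sum>y\<in>S. (if y = y0 then 1 else 0) *\<^sub>R (x - y)) = (\<Sum>y\<in>S. if y = y0 then x - y else 0)"
      by (rule sum.cong) auto
    also have "\<dots> = x - y0" using S(1) y0(1) by (simp add: sum.delta')
    finally show ?thesis .
  qed
  also have "(\<Sum>y\<in>S. (u y / c) *\<^sub>R (x - y)) = (1/c) *\<^sub>R ((\<Sum>y\<in>S. u y *\<^sub>R x) - (\<Sum>y\<in>S. u y *\<^sub>R y))"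
    by (simp add: scaleR_sum_right scaleR_diff_right sum_subtractf divide_inverse mult.commute)
  also have "(\<Sum>y\<in>S. u y *\<^sub>R x) = x" using u1 by (simp add: scaleR_sum_left[symmetric])
  finally have "x + (\<Sum>i<length ys. l i *\<^sub>R (x - ys!i)) = y0" using ux by simp
  then have "y0 \<in> dcone (butlast xs) (last xs)" using lnn unfolding dcone_def bl by blast
  moreover have "y0 \<in> D" using y0 S by auto
  ultimately show ?thesis using dc ne sub so bl unfolding discretely_conic_def by metis
qed

lemma cor:
  fixes D :: "'a::real_vector set"
  assumes dc: "discretely_conic D f" and fin: "\<And>\<alpha>::real. finite {x\<in>D. f x \<le> \<alpha>}"
    and x: "x \<in> D" and a: "a \<in> convex hull {y\<in>D. f y < f x}"
    and b: "b \<in> convex hull {y\<in>D. f y \<le> f x}" and s: "0 \<le> s" "s < 1"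
    and xe: "x = (1 - s) *\<^sub>R a + s *\<^sub>R b"
  shows False
proof -
  define S where "S = {y\<in>D. f y \<le> f x}"
  define A where "A = {y\<in>D. f y < f x}"
  have fS: "finite S" using fin S_def by blast
  have AS: "A \<subseteq> S" by (auto simp: A_def S_def)
  have fA: "finite A" using fS AS finite_subset by blast
  obtain ua where ua: "\<forall>y\<in>A. 0 \<le> ua y" "sum ua A = 1" "(\<Sum>y\<in>A. ua y *\<^sub>R y) = a"
    using a convex_hull_finite[OF fA] unfolding A_def by blast
  obtain ub where ub: "\<forall>y\<in>S. 0 \<le> ub y" "sum ub S = 1" "(\<Sum>y\<in>S. ub y *\<^sub>R y) = b"
    using b convex_hull_finite[OF fS] unfolding S_def by blast
  define ua' where "ua' y = (if y \<in> A then ua y else 0)" for y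
  have s1: "sum ua' S = 1"
  proof -
    have "sum ua' S = sum ua' A" using AS fS by (intro sum.mono_neutral_right) (auto simp: ua'_def)
    also have "\<dots> = sum ua A" by (rule sum.cong) (auto simp: ua'_def)
    finally show ?thesis using ua by simp
  qed
  have s2: "(\<Sum>y\<in>S. ua' y *\<^sub>R y) = a"
  proof -
    have "(\<Sum>y\<in>S. ua' y *\<^sub>R y) = (\<Sum>y\<in>A. ua' y *\<^sub>R y)" using AS fS by (intro sum.mono_neutral_right) (auto simp: ua'_def)
    also have "\<dots> = (\<Sum>y\<in>A. ua y *\<^sub>R y)" by (rule sum.cong) (auto simp: ua'_def)
    finally show ?thesis using ua by simp
  qed
  define u where "u y = (1 - s) * ua' y + s * ub y" for y
  have u0: "\<forall>y\<in>S. 0 \<le> u y" using ua ub s by (auto simp: u_def ua'_def)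
  have u1: "sum u S = 1" using s1 ub by (simp add: u_def sum.distrib sum_distrib_left[symmetric])
  have ux: "(\<Sum>y\<in>S. u y *\<^sub>R y) = x"
  proof -
    have "(\<Sum>y\<in>S. u y *\<^sub>R y) = (1 - s) *\<^sub>R (\<Sum>y\<in>S. ua' y *\<^sub>R y) + s *\<^sub>R (\<Sum>y\<in>S. ub y *\<^sub>R y)"
      by (simp add: u_def scaleR_add_left sum.distrib scaleR_sum_right)
    then show ?thesis using s2 ub xe by simp
  qed
  have "A \<noteq> {}" using a unfolding A_def by (metis convex_hull_empty empty_iff)
  have "\<exists>y0\<in>A. ua y0 > 0"
  proof (rule ccontr)
    assume "\<not> ?thesis"
    then have "\<forall>y\<in>A. ua y = 0" using ua(1) by (meson antisym not_less)
    then have "sum ua A = 0" by simp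
    then show False using ua by simp
  qed
  then obtain y0 where y0: "y0 \<in> A" "ua y0 > 0" by blast
  have "y0 \<in> S" using y0 AS by blast
  then have "ub y0 \<ge> 0" using ub by blast
  then have "u y0 > 0" using y0 s by (simp add: u_def ua'_def add_pos_nonneg)
  moreover have "S \<subseteq> D" "\<forall>y\<in>S. f y \<le> f x" by (auto simp: S_def)
  ultimately have "f x \<le> f y0" using key[OF dc x fS _ _ u0 u1 ux] \<open>y0 \<in> S\<close> by blast
  then show False using y0 by (simp add: A_def)
qed

lemma pair_comb:
  fixes S :: "'a::real_vector set"
  assumes "convex S" "x1 \<in> S" "x2 \<in> S" "0 \<le> p" "0 \<le> q"
  shows "\<exists>c\<in>S. p *\<^sub>R x1 + q *\<^sub>R x2 = (p + q) *\<^sub>R c"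
proof (cases "p + q = 0")
  case True
  then have "p = 0" "q = 0" using assms by auto
  then show ?thesis using assms by auto
next
  case False
  then have pq: "p + q > 0" using assms by auto
  define c where "c = (p / (p+q)) *\<^sub>R x1 + (q / (p+q)) *\<^sub>R x2"
  have "c \<in> S" unfolding c_def
    using convexD[OF assms(1) assms(2) assms(3), of "p/(p+q)" "q/(p+q)"] assms pq
    by (simp add: add_divide_distrib[symmetric])
  moreover have "(p + q) *\<^sub>R c = p *\<^sub>R x1 + q *\<^sub>R x2"
    using pq by (simp add: c_def scaleR_add_right)
  ultimately show ?thesis by metis
qed

lemma comb4:
  fixes A B :: "'a::real_vector set"
  assumes "convex A" "convex B" "a1 \<in> A" "a2 \<in> A" "b1 \<in> B" "b2 \<in> B"
    and "0 \<le> m" "m \<le> 1" "0 \<le> l" "l \<le> 1" "0 \<le> s" "s \<le> 1"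
  shows "\<exists>a\<in>A. \<exists>b\<in>B. (1-s) *\<^sub>R ((1-m) *\<^sub>R a1 + m *\<^sub>R b1) + s *\<^sub>R ((1-l) *\<^sub>R a2 + l *\<^sub>R b2)
      = (1 - ((1-s)*m + s*l)) *\<^sub>R a + ((1-s)*m + s*l) *\<^sub>R b"
proof -
  have nn: "0 \<le> (1-s)*(1-m)" "0 \<le> s*(1-l)" "0 \<le> (1-s)*m" "0 \<le> s*l" using assms by auto
  obtain a where a: "a \<in> A" "((1-s)*(1-m)) *\<^sub>R a1 + (s*(1-l)) *\<^sub>R a2 = ((1-s)*(1-m) + s*(1-l)) *\<^sub>R a"
    using pair_comb[OF assms(1,3,4) nn(1,2)] by blast
  obtain b where b: "b \<in> B" "((1-s)*m) *\<^sub>R b1 + (s*l) *\<^sub>R b2 = ((1-s)*m + s*l) *\<^sub>R b"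
    using pair_comb[OF assms(2,5,6) nn(3,4)] by blast
  have e: "(1-s)*(1-m) + s*(1-l) = 1 - ((1-s)*m + s*l)" by (simp add: algebra_simps)
  have "(1-s) *\<^sub>R ((1-m) *\<^sub>R a1 + m *\<^sub>R b1) + s *\<^sub>R ((1-l) *\<^sub>R a2 + l *\<^sub>R b2)
     = (((1-s)*(1-m)) *\<^sub>R a1 + (s*(1-l)) *\<^sub>R a2) + (((1-s)*m) *\<^sub>R b1 + (s*l) *\<^sub>R b2)"
    by (simp add: scaleR_add_right algebra_simps)
  also have "\<dots> = (1 - ((1-s)*m + s*l)) *\<^sub>R a + ((1-s)*m + s*l) *\<^sub>R b"
    using a(2) b(2) e by simp
  finally show ?thesis using a(1) b(1) by blast
qed

lemma closed_Lam:
  fixes A B :: "'a::real_normed_vector set"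
  assumes "compact A" "compact B"
  shows "closed {l \<in> {0..1::real}. \<exists>a\<in>A. \<exists>b\<in>B. x = (1-l) *\<^sub>R a + l *\<^sub>R b}"
proof -
  define K where "K = ({0..1::real} \<times> (A \<times> B)) \<inter> {p. (1 - fst p) *\<^sub>R fst (snd p) + fst p *\<^sub>R snd (snd p) = x}"
  have "closed {p::real \<times> ('a \<times> 'a). (1 - fst p) *\<^sub>R fst (snd p) + fst p *\<^sub>R snd (snd p) = x}"
    by (intro closed_Collect_eq continuous_intros)
  then have "compact K" unfolding K_def
    using assms by (intro compact_Int_closed compact_Times) auto
  then have "compact (fst ` K)" by (intro compact_continuous_image continuous_intros)
  moreover have "fst ` K = {l \<in> {0..1::real}. \<exists>a\<in>A. \<exists>b\<in>B. x = (1-l) *\<^sub>R a + l *\<^sub>R b}"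
  proof
    show "fst ` K \<subseteq> {l \<in> {0..1::real}. \<exists>a\<in>A. \<exists>b\<in>B. x = (1-l) *\<^sub>R a + l *\<^sub>R b}" unfolding K_def by force
    show "{l \<in> {0..1::real}. \<exists>a\<in>A. \<exists>b\<in>B. x = (1-l) *\<^sub>R a + l *\<^sub>R b} \<subseteq> fst ` K"
    proof
      fix l assume "l \<in> {l \<in> {0..1::real}. \<exists>a\<in>A. \<exists>b\<in>B. x = (1-l) *\<^sub>R a + l *\<^sub>R b}"
      then obtain a b where "l \<in> {0..1}" "a \<in> A" "b \<in> B" "x = (1-l) *\<^sub>R a + l *\<^sub>R b" by blast
      then have "(l, (a, b)) \<in> K" unfolding K_def by auto
      then show "l \<in> fst ` K" by (metis fst_conv image_eqI)
    qed
  qed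
  ultimately show ?thesis by (metis compact_imp_closed)
qed

lemma rhs:
  fixes D :: "'a::euclidean_space set"
  assumes dc: "discretely_conic D f" and fin: "\<And>\<alpha>::real. finite {x\<in>D. f x \<le> \<alpha>}"
    and z: "z \<in> D - MIN1 D f"
  shows "{x\<in>D. f x = f z} \<subseteq> rel_frontier (convex hull {x\<in>D. f x \<le> f z})"
proof
  fix x assume xx: "x \<in> {x\<in>D. f x = f z}"
  define P where "P = convex hull {x\<in>D. f x \<le> f z}"
  have xP: "x \<in> P" using xx unfolding P_def by (auto intro: hull_inc)
  obtain a where a: "a \<in> D" "f a < f z" using z unfolding MIN1_def by (auto simp: not_le)
  have aP: "a \<in> P" using a unfolding P_def by (auto intro: hull_inc)
  have "x \<notin> rel_interior P"
  proof
    assume "x \<in> rel_interior P"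
    then obtain e where e: "e > 0" "ball x e \<inter> affine hull P \<subseteq> P" by (auto simp: mem_rel_interior_ball)
    have ax: "a \<noteq> x" using a xx by auto
    then have nx: "norm (x - a) > 0" by simp
    define t where "t = e / (2 * norm (x - a))"
    have t: "t > 0" using e nx by (simp add: t_def)
    define p where "p = x + t *\<^sub>R (x - a)"
    have "dist x p = t * norm (x - a)" using t by (simp add: p_def dist_norm)
    also have "\<dots> = e / 2" using nx by (simp add: t_def)
    finally have "p \<in> ball x e" using e by simp
    moreover have "p \<in> affine hull P"
    proof -
      have "(1 + t) *\<^sub>R x + (-t) *\<^sub>R a \<in> affine hull P"
        using mem_affine[OF affine_affine_hull, of x P a "1+t" "-t"] xP aP hull_inc[of _ P]
        by (simp add: hull_inc)
      moreover have "(1 + t) *\<^sub>R x + (-t) *\<^sub>R a = p" by (simp add: p_def algebra_simps)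
      ultimately show ?thesis by simp
    qed
    ultimately have pP: "p \<in> P" using e by blast
    define s where "s = 1 / (1 + t)"
    have s: "0 \<le> s" "s < 1" using t by (auto simp: s_def)
    have st: "s * t = 1 - s" "s + s * t = 1" using t by (auto simp: s_def field_simps)
    have "(1 - s) *\<^sub>R a + s *\<^sub>R p = (1 - s) *\<^sub>R a + s *\<^sub>R x + (s * t) *\<^sub>R x - (s * t) *\<^sub>R a"
      by (simp add: p_def algebra_simps)
    also have "\<dots> = (s + s * t) *\<^sub>R x" by (simp add: st(1) algebra_simps)
    finally have xe: "x = (1 - s) *\<^sub>R a + s *\<^sub>R p" using st(2) by simp
    have "a \<in> convex hull {y\<in>D. f y < f x}" using a xx by (auto intro: hull_inc)
    moreover have "p \<in> convex hull {y\<in>D. f y \<le> f x}" using pP xx by (simp add: P_def)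
    ultimately show False using cor[OF dc fin _ _ _ s xe] xx by blast
  qed
  then show "x \<in> rel_frontier P" using xP closure_subset by (auto simp: rel_frontier_def)
qed

theorem mainTheorem5:
  fixes D :: "(real ^ 'n) set" and f :: "real ^ 'n \<Rightarrow> real"
  assumes "discrete_set D"
    and "discretely_conic D f"
    and "\<And>\<alpha>::real. finite {x\<in>D. f x \<le> \<alpha>}"
  shows "(\<exists>g. conic_on (convex hull D) g \<and> (\<forall>x\<in>D. g x = f x)) \<longleftrightarrow>
         (\<forall>z\<in>D - MIN1 D f.
            {x\<in>D. f x = f z} \<subseteq> rel_frontier (convex hull {x\<in>D. f x \<le> f z}))"
proof -
  note dc = assms(2) and fin = assms(3)
  have R: "\<forall>z\<in>D - MIN1 D f. {x\<in>D. f x = f z} \<subseteq> rel_frontier (convex hull {x\<in>D. f x \<le> f z})"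
    using rhs[OF dc fin] by blast
  have L: "\<exists>g. conic_on (convex hull D) g \<and> (\<forall>x\<in>D. g x = f x)"
  proof -
    define C where "C = convex hull D"
    define V where "V = f ` D"
    define B where "B v = convex hull {x\<in>D. f x \<le> v}" for v
    define lev where "lev x = (LEAST v. v \<in> V \<and> x \<in> B v)" for x
    define prev where "prev \<gamma> = Max {v\<in>V. v < \<gamma>}" for \<gamma>
    define Lam where "Lam x \<gamma> = {l \<in> {0..1::real}. \<exists>a\<in>B (prev \<gamma>). \<exists>b\<in>B \<gamma>. x = (1-l) *\<^sub>R a + l *\<^sub>R b}" for x \<gamma>
    define N where "N \<gamma> = ({v\<in>V. v < \<gamma>} \<noteq> {})" for \<gamma>
    define g where "g x = (if N (lev x) then prev (lev x) + Inf (Lam x (lev x)) * (lev x - prev (lev x)) else lev x)" for x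
    have LamD: "0 \<le> l \<and> l \<le> 1 \<and> (\<exists>a\<in>B (prev \<gamma>). \<exists>b\<in>B \<gamma>. x = (1-l) *\<^sub>R a + l *\<^sub>R b)"
      if "l \<in> Lam x \<gamma>" for l x \<gamma> using that by (simp add: Lam_def)
    have Bmono: "B v \<subseteq> B w" if "v \<le> w" for v w unfolding B_def using that by (intro hull_mono) auto
    have Bcomp: "compact (B v)" for v unfolding B_def by (rule compact_convex_hull, rule finite_imp_compact, rule fin)
    have Bconv: "convex (B v)" for v unfolding B_def by simp
    have finV: "finite {v\<in>V. v \<le> \<alpha>}" for \<alpha>
    proof -
      have "{v\<in>V. v \<le> \<alpha>} \<subseteq> f ` {x\<in>D. f x \<le> \<alpha>}" by (auto simp: V_def)
      then show ?thesis using fin finite_subset by blast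
    qed
    have inB: "x \<in> B (f x)" if "x \<in> D" for x unfolding B_def using that by (intro hull_inc) simp
    have ex: "\<exists>v\<in>V. x \<in> B v" if "x \<in> C" for x
    proof -
      have "x \<in> convex hull D" using that by (simp add: C_def)
      then have "\<exists>S. finite S \<and> S \<subseteq> D \<and> card S \<le> DIM(real^'n) + 1 \<and> x \<in> convex hull S"
        by (subst (asm) caratheodory) simp
      then obtain S where S: "finite S" "S \<subseteq> D" "x \<in> convex hull S" by blast
      have "S \<noteq> {}" using S(3) by (metis convex_hull_empty empty_iff)
      define v where "v = Max (f ` S)"
      have "v \<in> f ` S" unfolding v_def using S(1) \<open>S \<noteq> {}\<close> by (intro Max_in) auto
      then have "v \<in> V" using S(2) by (auto simp: V_def)
      moreover have "S \<subseteq> {x\<in>D. f x \<le> v}" using S(1,2) unfolding v_def by (auto intro!: Max_ge)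
      then have "x \<in> B v" unfolding B_def using S(3) hull_mono by blast
      ultimately show ?thesis by blast
    qed
    have levP: "lev x \<in> V \<and> x \<in> B (lev x) \<and> (\<forall>v\<in>V. x \<in> B v \<longrightarrow> lev x \<le> v)" if xC: "x \<in> C" for x
    proof -
      obtain v0 where v0: "v0 \<in> V" "x \<in> B v0" using ex[OF xC] by blast
      define M where "M = {v\<in>V. v \<le> v0 \<and> x \<in> B v}"
      have fM: "finite M" using finV[of v0] by (rule finite_subset[rotated]) (auto simp: M_def)
      have "v0 \<in> M" using v0 by (auto simp: M_def)
      then have mM: "Min M \<in> M" using fM by (intro Min_in) auto
      have minM: "Min M \<le> y" if y: "y \<in> V \<and> x \<in> B y" for y
      proof (cases "y \<le> v0")
        case True then show ?thesis using y fM by (intro Min_le) (auto simp: M_def)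
      next
        case False then show ?thesis using mM by (auto simp: M_def)
      qed
      have "lev x = Min M" unfolding lev_def
      proof (rule Least_equality)
        show "Min M \<in> V \<and> x \<in> B (Min M)" using mM by (auto simp: M_def)
      qed (rule minM)
      then show ?thesis using mM minM by (auto simp: M_def)
    qed
    have prevP: "prev \<gamma> \<in> V \<and> prev \<gamma> < \<gamma> \<and> (\<forall>v\<in>V. v < \<gamma> \<longrightarrow> v \<le> prev \<gamma>)" if "N \<gamma>" for \<gamma>
    proof -
      have f: "finite {v\<in>V. v < \<gamma>}" using finV[of \<gamma>] by (rule finite_subset[rotated]) auto
      have "prev \<gamma> \<in> {v\<in>V. v < \<gamma>}" unfolding prev_def using f that by (intro Max_in) (auto simp: N_def)
      moreover have "\<forall>v\<in>V. v < \<gamma> \<longrightarrow> v \<le> prev \<gamma>" unfolding prev_def using f by auto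
      ultimately show ?thesis by auto
    qed
    have VD: "\<exists>d\<in>D. d \<in> B v" if "v \<in> V" for v using that inB by (auto simp: V_def)
    have Lam1: "Inf (Lam x (lev x)) \<in> Lam x (lev x) \<and> 0 < Inf (Lam x (lev x)) \<and> Inf (Lam x (lev x)) \<le> 1"
      if x: "x \<in> C" "N (lev x)" for x
    proof -
      let ?g = "lev x" let ?L = "Lam x (lev x)"
      have P: "prev ?g \<in> V" "prev ?g < ?g" using prevP[OF x(2)] by auto
      obtain d where d: "d \<in> B (prev ?g)" using VD[OF P(1)] by blast
      have "x \<in> B ?g" using levP[OF x(1)] by blast
      then have "x = (1-1) *\<^sub>R d + 1 *\<^sub>R x" by simp
      then have "1 \<in> ?L" using d \<open>x \<in> B ?g\<close> unfolding Lam_def by (intro CollectI conjI) auto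
      then have ne: "?L \<noteq> {}" by blast
      have bdd: "bdd_below ?L" unfolding Lam_def by (rule bdd_belowI[of _ 0]) auto
      have cl: "closed ?L" unfolding Lam_def by (intro closed_Lam Bcomp)
      have I: "Inf ?L \<in> ?L" using closed_contains_Inf[OF ne bdd cl] .
      have "Inf ?L \<noteq> 0"
      proof
        assume "Inf ?L = 0"
        then have "0 \<in> ?L" using I by simp
        then have "x \<in> B (prev ?g)" unfolding Lam_def by auto
        then have "?g \<le> prev ?g" using levP[OF x(1)] P(1) by blast
        then show False using P(2) by simp
      qed
      moreover have "Inf ?L \<ge> 0" "Inf ?L \<le> 1" using I unfolding Lam_def by auto
      ultimately show ?thesis using I by auto
    qed
    have gle: "g x \<le> lev x" if "x \<in> C" for x
    proof (cases "N (lev x)")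
      case True
      have "prev (lev x) < lev x" using prevP[OF True] by blast
      moreover have "Inf (Lam x (lev x)) \<le> 1" using Lam1[OF that True] by blast
      ultimately have "Inf (Lam x (lev x)) * (lev x - prev (lev x)) \<le> 1 * (lev x - prev (lev x))"
        by (intro mult_right_mono) auto
      then show ?thesis using True by (simp add: g_def)
    qed (simp add: g_def)
    have ggt: "prev (lev x) < g x" if "x \<in> C" "N (lev x)" for x
    proof -
      have "prev (lev x) < lev x" using prevP[OF that(2)] by blast
      moreover have "0 < Inf (Lam x (lev x))" using Lam1[OF that] by blast
      ultimately show ?thesis using that by (simp add: g_def)
    qed
    have gmono: "g x < g x'" if "x \<in> C" "x' \<in> C" "lev x < lev x'" for x x'
    proof -
      have N': "N (lev x')" using levP[OF that(1)] that(3) by (auto simp: N_def)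
      have "lev x \<le> prev (lev x')" using prevP[OF N'] levP[OF that(1)] that(3) by blast
      then show ?thesis using gle[OF that(1)] ggt[OF that(2) N'] by linarith
    qed
    have agree: "\<forall>x\<in>D. g x = f x"
    proof
      fix x assume xD: "x \<in> D"
      have xC: "x \<in> C" unfolding C_def using xD by (rule hull_inc)
      have fV: "f x \<in> V" using xD by (simp add: V_def)
      have le: "lev x \<le> f x" using levP[OF xC] fV inB[OF xD] by blast
      have lev: "lev x = f x"
      proof (rule ccontr)
        assume "lev x \<noteq> f x"
        then have lt: "lev x < f x" using le by simp
        have "x \<in> B (lev x)" using levP[OF xC] by blast
        moreover have "B (lev x) \<subseteq> convex hull {y\<in>D. f y < f x}" unfolding B_def
          using lt by (intro hull_mono) auto
        ultimately have "x \<in> convex hull {y\<in>D. f y < f x}" by blast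
        moreover have "x \<in> convex hull {y\<in>D. f y \<le> f x}" using xD by (auto intro: hull_inc)
        ultimately show False using cor[OF dc fin xD, of x x 0] by simp
      qed
      show "g x = f x"
      proof (cases "N (lev x)")
        case False then show ?thesis using lev by (simp add: g_def)
      next
        case True
        let ?L = "Lam x (lev x)"
        have I: "Inf ?L \<in> ?L" "Inf ?L \<le> 1" using Lam1[OF xC True] by auto
        have "Inf ?L = 1"
        proof (rule ccontr)
          assume "Inf ?L \<noteq> 1"
          then have lt1: "Inf ?L < 1" using I by simp
          obtain a b where ab: "a \<in> B (prev (lev x))" "b \<in> B (lev x)" "0 \<le> Inf ?L"
            "x = (1 - Inf ?L) *\<^sub>R a + Inf ?L *\<^sub>R b"
            using LamD[OF I(1)] by blast
          have "prev (lev x) < f x" using prevP[OF True] lev by simp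
          then have "B (prev (lev x)) \<subseteq> convex hull {y\<in>D. f y < f x}" unfolding B_def
            by (intro hull_mono) auto
          then have "a \<in> convex hull {y\<in>D. f y < f x}" using ab by blast
          moreover have "b \<in> convex hull {y\<in>D. f y \<le> f x}" using ab lev by (simp add: B_def)
          ultimately show False using cor[OF dc fin xD _ _ ab(3) lt1 ab(4)] by blast
        qed
        then show ?thesis using True lev by (simp add: g_def)
      qed
    qed
    have conic: "conic_on C g"
      unfolding conic_on_def
    proof (intro ballI allI impI)
      fix y z and t :: real
      assume y: "y \<in> C" and z: "z \<in> C" and H: "0 \<le> t \<and> g y \<le> g z \<and> z + t *\<^sub>R (z - y) \<in> C"
      define w where "w = z + t *\<^sub>R (z - y)"
      have w: "w \<in> C" and t: "0 \<le> t" and gyz: "g y \<le> g z" using H by (auto simp: w_def)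
      show "g z \<le> g (z + t *\<^sub>R (z - y))"
      proof (rule ccontr)
        assume "\<not> ?thesis"
        then have gwz: "g w < g z" by (simp add: w_def)
        have lw: "lev w \<le> lev z" using gmono[OF z w] gwz by (meson not_le order.asym)
        have ly: "lev y \<le> lev z" using gmono[OF z y] gyz by (meson not_le order.asym order.strict_trans2)
        show False
        proof (cases "N (lev z)")
          case False
          have "lev w \<in> V" using levP[OF w] by blast
          then have "lev w = lev z" using lw False unfolding N_def by (metis (mono_tags, lifting) empty_iff mem_Collect_eq order_less_le)
          then have "g w = g z" using False by (simp add: g_def)
          then show False using gwz by simp
        next
          case True
          define \<gamma> where "\<gamma> = lev z"
          define \<beta> where "\<beta> = prev \<gamma>"
          have P: "\<beta> \<in> V" "\<beta> < \<gamma>" "\<forall>v\<in>V. v < \<gamma> \<longrightarrow> v \<le> \<beta>" using prevP[OF True] by (auto simp: \<beta>_def \<gamma>_def)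
          have zB: "z \<in> B \<gamma>" using levP[OF z] by (simp add: \<gamma>_def)
          have rep: "\<exists>m. 0 \<le> m \<and> m \<le> 1 \<and> (\<exists>a\<in>B \<beta>. \<exists>b\<in>B \<gamma>. u = (1-m) *\<^sub>R a + m *\<^sub>R b)
                     \<and> (lev u = \<gamma> \<longrightarrow> m = Inf (Lam u \<gamma>)) \<and> (lev u \<noteq> \<gamma> \<longrightarrow> m = 0)"
            if u: "u \<in> C" "lev u \<le> \<gamma>" for u
          proof (cases "lev u = \<gamma>")
            case True
            then have "N (lev u)" using \<open>N (lev z)\<close> by (simp add: \<gamma>_def)
            then have "Inf (Lam u \<gamma>) \<in> Lam u \<gamma>" using Lam1[OF u(1)] True by simp
            then show ?thesis using True unfolding Lam_def \<beta>_def by auto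
          next
            case False
            then have "lev u < \<gamma>" using u by simp
            then have "lev u \<le> \<beta>" using P levP[OF u(1)] by blast
            then have "u \<in> B \<beta>" using levP[OF u(1)] Bmono by blast
            then have "\<exists>a\<in>B \<beta>. \<exists>b\<in>B \<gamma>. u = (1-0) *\<^sub>R a + 0 *\<^sub>R b" using zB by auto
            then show ?thesis using False by (intro exI[of _ 0]) auto
          qed
          obtain mw a1 b1 where W: "0 \<le> mw" "mw \<le> 1" "a1 \<in> B \<beta>" "b1 \<in> B \<gamma>" "w = (1-mw) *\<^sub>R a1 + mw *\<^sub>R b1"
            "lev w = \<gamma> \<longrightarrow> mw = Inf (Lam w \<gamma>)" "lev w \<noteq> \<gamma> \<longrightarrow> mw = 0"
            using rep[OF w lw[folded \<gamma>_def]] by blast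
          obtain ml a2 b2 where Y: "0 \<le> ml" "ml \<le> 1" "a2 \<in> B \<beta>" "b2 \<in> B \<gamma>" "y = (1-ml) *\<^sub>R a2 + ml *\<^sub>R b2"
            "lev y = \<gamma> \<longrightarrow> ml = Inf (Lam y \<gamma>)" "lev y \<noteq> \<gamma> \<longrightarrow> ml = 0"
            using rep[OF y ly[folded \<gamma>_def]] by blast
          define lz where "lz = Inf (Lam z \<gamma>)"
          have Lz: "lz \<in> Lam z \<gamma>" "0 < lz" "lz \<le> 1" using Lam1[OF z True] by (auto simp: lz_def \<gamma>_def)
          have gz: "g z = \<beta> + lz * (\<gamma> - \<beta>)" using True by (simp add: g_def lz_def \<beta>_def \<gamma>_def)
          have gp: "\<gamma> - \<beta> > 0" using P by simp
          have mwl: "mw < lz"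
          proof (cases "lev w = \<gamma>")
            case True
            then have "N (lev w)" using \<open>N (lev z)\<close> by (simp add: \<gamma>_def)
            then have "g w = \<beta> + mw * (\<gamma> - \<beta>)" using True W(6) by (simp add: g_def \<beta>_def)
            then have "mw * (\<gamma> - \<beta>) < lz * (\<gamma> - \<beta>)" using gwz gz by simp
            then show ?thesis using gp by (simp add: mult_less_cancel_right)
          next
            case False then show ?thesis using W(7) Lz by simp
          qed
          have mll: "ml \<le> lz"
          proof (cases "lev y = \<gamma>")
            case True
            then have "N (lev y)" using \<open>N (lev z)\<close> by (simp add: \<gamma>_def)
            then have "g y = \<beta> + ml * (\<gamma> - \<beta>)" using True Y(6) by (simp add: g_def \<beta>_def)
            then have "ml * (\<gamma> - \<beta>) \<le> lz * (\<gamma> - \<beta>)" using gyz gz by simp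
            then show ?thesis using gp by (simp add: mult_le_cancel_right)
          next
            case False then show ?thesis using Y(7) Lz by simp
          qed
          define s where "s = t / (1 + t)"
          have s: "0 \<le> s" "s < 1" using t by (auto simp: s_def)
          have e1: "(1 + t) *\<^sub>R z = w + t *\<^sub>R y" by (simp add: w_def algebra_simps)
          have s1: "1 - s = 1 / (1 + t)" using t by (simp add: s_def field_simps)
          have s2: "s = (1 / (1 + t)) * t" by (simp add: s_def)
          have "(1 - s) *\<^sub>R w + s *\<^sub>R y = (1 / (1 + t)) *\<^sub>R (w + t *\<^sub>R y)"
            unfolding s1 by (simp only: s2 scaleR_add_right scaleR_scaleR)
          also have "\<dots> = (1 / (1 + t)) *\<^sub>R ((1 + t) *\<^sub>R z)" by (simp only: e1)
          also have "\<dots> = z" using t by simp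
          finally have F: "z = (1 - s) *\<^sub>R w + s *\<^sub>R y" by simp
          have ze: "z = (1 - s) *\<^sub>R ((1-mw) *\<^sub>R a1 + mw *\<^sub>R b1) + s *\<^sub>R ((1-ml) *\<^sub>R a2 + ml *\<^sub>R b2)"
            using F unfolding W(5) Y(5) .
          define nu where "nu = (1-s)*mw + s*ml"
          obtain a b where ab0: "a \<in> B \<beta>" "b \<in> B \<gamma>"
            "(1 - s) *\<^sub>R ((1-mw) *\<^sub>R a1 + mw *\<^sub>R b1) + s *\<^sub>R ((1-ml) *\<^sub>R a2 + ml *\<^sub>R b2) = (1 - nu) *\<^sub>R a + nu *\<^sub>R b"
            using comb4[OF Bconv Bconv W(3) Y(3) W(4) Y(4) W(1,2) Y(1,2) s(1) less_imp_le[OF s(2)]]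
            unfolding nu_def by blast
          have ab: "z = (1 - nu) *\<^sub>R a + nu *\<^sub>R b" using ze ab0(3) by simp
          have nu0: "0 \<le> nu" unfolding nu_def using s W(1) Y(1) by (intro add_nonneg_nonneg mult_nonneg_nonneg) auto
          have "(1-s)*mw \<le> (1-s)*1" using s W(2) by (intro mult_left_mono) auto
          moreover have "s*ml \<le> s*1" using s Y(2) by (intro mult_left_mono) auto
          ultimately have nu1: "nu \<le> 1" unfolding nu_def by simp
          have "nu \<in> {0..1}" using nu0 nu1 by simp
          then have "nu \<in> Lam z \<gamma>" unfolding Lam_def \<beta>_def[symmetric] using ab0(1,2) ab by blast
          moreover have "bdd_below (Lam z \<gamma>)" by (rule bdd_belowI[of _ 0]) (simp add: Lam_def)
          ultimately have "lz \<le> nu" unfolding lz_def by (rule cInf_lower)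
          moreover have "(1-s)*mw < (1-s)*lz" using mwl s by (intro mult_strict_left_mono) auto
          moreover have "s*ml \<le> s*lz" using mll s by (intro mult_left_mono) auto
          ultimately show False unfolding nu_def by (simp add: algebra_simps)
        qed
      qed
    qed
    show ?thesis using conic agree unfolding C_def by blast
  qed
  show ?thesis using L R by blast
qed

end
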